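(* Assume (A1), (A2), and let $M^*>0$ be such that $\pi^\mu\in\mathscr P^{M^*}_{\beta^*}$ for every $\mu\in\mathscr P^{M^*}_{\beta^*}$. Assume further: (A31) for every $\mu\in\mathscr P^{M^*}_{\beta^*}$ there is a function $h_\mu:[0,\infty)\to[0,\infty)$ with $\lim_{t\to\infty}h_\mu(t)=0$ such that $\|\pi^\mu-\delta_xP^\mu_t\|_{\rm var}\le(1+|x|^{\beta^*})h_\mu(t)$ for all $x\in\mathbb R^d$, $t\ge0$; (A32) for every $n\ge1$ and $\mu\in\mathscr P^{M^*}_{\beta^*}$ there is $K_{n,\mu}>0$ with $\langle x-y,b(x,\mu)-b(y,\mu)\rangle\le K_{n,\mu}|x-y|^2$ for all $x,y$ with $|x|\vee|y|\le n$, and $\sup_{|x|\le n}|b(x,\bar\mu)-b(x,\mu)|\to0$ as $\bar\mu\to\mu$ weakly with $\bar\mu\in\mathscr P^{M^*}_{\beta^*}$. Then for every $f\in C_b(\mathbb R^d)$ and $\mu\in\mathscr P^{M^*}_{\beta^*}$, $|\pi^{\bar\mu}(f)-\pi^\mu(f)|\to0$ as $\bar\mu\to\mu$ weakly with $\bar\mu\in\mathscr P^{M^*}_{\beta^*}$. In particular the map $\mathscr P^{M^*}_{\beta^*}\ni\mu\mapsto\pi^\mu$ is weakly continuous.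
   Context: Setting. $d\ge1$; $\mathscr P(\mathbb R^d)$ is the set of Borel probability measures on $\mathbb R^d$, $\mu(f):=\int f\,\mathrm d\mu$; for $p>0$, $\mathscr P_p=\{\mu:\mu(|\cdot|^p)<\infty\}$ and for $M>0$, $\mathscr P_p^M=\{\mu\in\mathscr P_p:\mu(|\cdot|^p)\le M\}$. $\|\cdot\|_{\rm var}$ is the total variation norm. $(Z_t)$ is a $d$-dimensional pure jump Lévy process whose Lévy measure $\nu$ satisfies $\nu(|\cdot|^2\mathbf 1_{\{|\cdot|\le1\}})+\nu(|\cdot|^{\beta_*}\mathbf 1_{\{|\cdot|>1\}})<\infty$ for some $\beta_*\in(0,2]$. $b:\mathbb R^d\times\mathscr P(\mathbb R^d)\to\mathbb R^d$. For fixed $\mu$, $(Y^\mu_t)$ solves $\mathrm dY^\mu_t=b(Y^\mu_t,\mu)\mathrm dt+\mathrm dZ_t$, $(P^\mu_t)$ is its semigroup, $\delta_xP^\mu_t$ the law of $Y^\mu_t$ started at $x$; IPM means invariant probability measure. (A1): there are constants $\beta\in(0,\beta_*]$, $\lambda_1,\lambda_2,C_b,\theta_1,\theta_3,\theta_4>0$, $\theta_2\ge0$ with $\theta_1\ge1-\beta/2$, $\theta_2<1+\theta_1$, $\theta_3\in(0,\beta^*]$, where $\beta^*:=\beta+\theta_1-1$ and $\gamma_1:=(\beta+\theta_2-2)^+/\beta^*\in[0,1)$, and either (i) $\beta^*(1-\gamma_1)>\theta_3\theta_4$, or (ii) $\beta^*(1-\gamma_1)=\theta_3\theta_4$ and $\lambda_1>\lambda_2$,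 such that for all $x\in\mathbb R^d$, $\mu\in\mathscr P_{\beta^*}$: $\langle x,b(x,\mu)\rangle\le C_b-\lambda_1|x|^{1+\theta_1}+\lambda_2(1+|x|^2)^{\theta_2/2}\mu(|\cdot|^{\theta_3})^{\theta_4}$. (A2): for every $\mu\in\mathscr P_{\beta^*}$, $(Y^\mu_t)$ is a $C_b$-Feller process and has a unique IPM $\pi^\mu$. *)

theory Defs
  imports "HOL-Probability.Probability"
begin

definition prob_measures :: "'a::euclidean_space measure set" where
  "prob_measures = {\<mu>. prob_space \<mu> \<and> sets \<mu> = sets borel}"

definition moment :: "real \<Rightarrow> 'a::euclidean_space measure \<Rightarrow> ennreal" where
  "moment p \<mu> = (\<integral>\<^sup>+ x. ennreal (norm x powr p) \<partial>\<mu>)"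

definition Pp :: "real \<Rightarrow> 'a::euclidean_space measure set" where
  "Pp p = {\<mu> \<in> prob_measures. moment p \<mu> < \<infinity>}"

definition PpM :: "real \<Rightarrow> real \<Rightarrow> 'a::euclidean_space measure set" where
  "PpM p Mb = {\<mu> \<in> prob_measures. moment p \<mu> \<le> ennreal Mb}"

definition weak_conv_seq :: "(nat \<Rightarrow> 'a::euclidean_space measure) \<Rightarrow> 'a measure \<Rightarrow> bool" where
  "weak_conv_seq \<mu>s \<mu> \<longleftrightarrow>
     (\<forall>f :: 'a \<Rightarrow> real. continuous_on UNIV f \<and> bounded (range f) \<longrightarrow>
        (\<lambda>n. \<integral>x. f x \<partial>(\<mu>s n)) \<longlonglongrightarrow> (\<integral>x. f x \<partial>\<mu>))"

definition var_norm_diff :: "'a::euclidean_space measure \<Rightarrow> 'a measure \<Rightarrow> real" where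
  "var_norm_diff \<mu> \<nu> =
     (SUP f \<in> {f :: 'a \<Rightarrow> real. f \<in> borel_measurable borel \<and> (\<forall>x. \<bar>f x\<bar> \<le> 1)}.
        \<bar>(\<integral>x. f x \<partial>\<mu>) - (\<integral>x. f x \<partial>\<nu>)\<bar>)"

definition levy_measure_cond :: "'a::euclidean_space measure \<Rightarrow> real \<Rightarrow> bool" where
  "levy_measure_cond \<nu> \<beta>s \<longleftrightarrow>
     sets \<nu> = sets borel \<and> emeasure \<nu> {0} = 0 \<and>
     (\<integral>\<^sup>+ z. ennreal (norm z ^ 2 * indicator (cball 0 1) z) \<partial>\<nu>)
       + (\<integral>\<^sup>+ z. ennreal (norm z powr \<beta>s * indicator (- cball 0 1) z) \<partial>\<nu>) < \<infinity>"

definition levy_exponent :: "'a::euclidean_space measure \<Rightarrow> 'a \<Rightarrow> complex" where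
  "levy_exponent \<nu> \<xi> =
     (\<integral>z. (cis (\<xi> \<bullet> z) - 1 - \<i> * complex_of_real (\<xi> \<bullet> z) * indicator (cball 0 1) z) \<partial>\<nu>)"

definition pure_jump_levy :: "'w measure \<Rightarrow> 'a::euclidean_space measure \<Rightarrow> (real \<Rightarrow> 'w \<Rightarrow> 'a) \<Rightarrow> bool" where
  "pure_jump_levy M \<nu> Z \<longleftrightarrow>
     prob_space M \<and>
     (\<forall>t. Z t \<in> borel_measurable M) \<and>
     (\<forall>\<omega>\<in>space M. Z 0 \<omega> = 0) \<and>
     (\<forall>\<omega>\<in>space M. \<forall>t\<ge>0. continuous (at_right t) (\<lambda>s. Z s \<omega>) \<and>
                              (t > 0 \<longrightarrow> (\<exists>l. ((\<lambda>s. Z s \<omega>) \<longlongrightarrow> l) (at_left t)))) \<and>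
     (\<forall>s t. 0 \<le> s \<longrightarrow> s \<le> t \<longrightarrow>
        prob_space.indep_set M
          (sigma_sets (space M) (\<Union>u\<in>{0..s}. {Z u -` B \<inter> space M | B. B \<in> sets borel}))
          {(\<lambda>\<omega>. Z t \<omega> - Z s \<omega>) -` B \<inter> space M | B. B \<in> sets borel}) \<and>
     (\<forall>s t \<xi>. 0 \<le> s \<longrightarrow> s \<le> t \<longrightarrow>
        (\<integral>\<omega>. cis (\<xi> \<bullet> (Z t \<omega> - Z s \<omega>)) \<partial>M) = exp (complex_of_real (t - s) * levy_exponent \<nu> \<xi>))"

section \<open>The SDE dY = b(Y, mu) dt + dZ (pathwise, since the noise is additive)\<close>

definition sde_solution ::
  "'w measure \<Rightarrow> (real \<Rightarrow> 'w \<Rightarrow> 'a::euclidean_space) \<Rightarrow> ('a \<Rightarrow> 'a measure \<Rightarrow> 'a) \<Rightarrow> 'a measure \<Rightarrow> 'a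
     \<Rightarrow> (real \<Rightarrow> 'w \<Rightarrow> 'a) \<Rightarrow> bool" where
  "sde_solution M Z b \<mu> x Yx \<longleftrightarrow>
     (\<forall>t\<ge>0. Yx t \<in> borel_measurable M) \<and>
     (\<forall>\<omega>\<in>space M. \<forall>t\<ge>0.
        set_integrable lborel {0..t} (\<lambda>s. b (Yx s \<omega>) \<mu>) \<and>
        Yx t \<omega> = x + set_lebesgue_integral lborel {0..t} (\<lambda>s. b (Yx s \<omega>) \<mu>) + Z t \<omega>)"

text \<open>delta_x P^mu_t = law of Y^mu_t started at x\<close>
definition trans_law :: "'w measure \<Rightarrow> ('a::euclidean_space \<Rightarrow> real \<Rightarrow> 'w \<Rightarrow> 'a) \<Rightarrow> 'a \<Rightarrow> real \<Rightarrow> 'a measure" where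
  "trans_law M Y x t = distr M borel (Y x t)"

definition Cb_Feller :: "'w measure \<Rightarrow> ('a::euclidean_space \<Rightarrow> real \<Rightarrow> 'w \<Rightarrow> 'a) \<Rightarrow> bool" where
  "Cb_Feller M Y \<longleftrightarrow>
     (\<forall>t\<ge>0. \<forall>A\<in>sets borel. (\<lambda>x. measure (trans_law M Y x t) A) \<in> borel_measurable borel) \<and>
     (\<forall>s\<ge>0. \<forall>t\<ge>0. \<forall>x. \<forall>A\<in>sets borel.
        measure (trans_law M Y x (t + s)) A = (\<integral>y. measure (trans_law M Y y s) A \<partial>(trans_law M Y x t))) \<and>
     (\<forall>t\<ge>0. \<forall>f :: 'a \<Rightarrow> real. continuous_on UNIV f \<and> bounded (range f) \<longrightarrow>
        continuous_on UNIV (\<lambda>x. \<integral>y. f y \<partial>(trans_law M Y x t)))"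

definition invariant_pm :: "'w measure \<Rightarrow> ('a::euclidean_space \<Rightarrow> real \<Rightarrow> 'w \<Rightarrow> 'a) \<Rightarrow> 'a measure \<Rightarrow> bool" where
  "invariant_pm M Y \<pi> \<longleftrightarrow>
     \<pi> \<in> prob_measures \<and>
     (\<forall>t\<ge>0. \<forall>A\<in>sets borel. (\<integral>x. measure (trans_law M Y x t) A \<partial>\<pi>) = measure \<pi> A)"

end

theory Submission
  imports Defs
begin


lemma stab_step:
  fixes g D :: "real \<Rightarrow> 'a::euclidean_space"
  assumes K: "0 < K" and e: "0 \<le> e" and s0: "0 \<le> s" and ss: "s \<le> u"
    and gi: "g integrable_on {s..u}" and ngi: "(\<lambda>r. norm (g r)) integrable_on {s..u}"
    and Deq: "\<And>r. r \<in> {s..u} \<Longrightarrow> D r = D s + integral {s..r} g"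
    and Db: "\<And>r. r \<in> {s..u} \<Longrightarrow> norm (D r) \<le> 1"
    and mono: "\<And>r. r \<in> {s..u} \<Longrightarrow> D r \<bullet> g r \<le> e + K  *  (norm (D r))\<^sup>2"
  shows "exp (-2 * K * u)  *  ((norm (D u))\<^sup>2 + e/K) \<le> exp (-2 * K * s)  *  ((norm (D s))\<^sup>2 + e/K)
     + integral {s..u} (\<lambda>r. norm (g r))  *  (4 * K * (u-s) + 3  *  integral {s..u} (\<lambda>r. norm (g r)))"
proof -
  define \<Gamma> where "\<Gamma> = integral {s..u} (\<lambda>r. norm (g r))"
  have G0: "0 \<le> \<Gamma>" unfolding \<Gamma>_def by (rule integral_nonneg[OF ngi]) auto
  have Dr: "norm (D r - D s) \<le> \<Gamma>" if r: "r \<in> {s..u}" for r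
  proof -
    have sub: "{s..r} \<subseteq> {s..u}" using r by auto
    have gi': "g integrable_on {s..r}" by (rule integrable_subinterval_real[OF gi sub])
    have ngi': "(\<lambda>r. norm (g r)) integrable_on {s..r}" by (rule integrable_subinterval_real[OF ngi sub])
    have ngi'': "(\<lambda>r. norm (g r)) integrable_on {r..u}" by (rule integrable_subinterval_real[OF ngi]) (use r in auto)
    have "norm (D r - D s) = norm (integral {s..r} g)" using Deq[OF r] by simp
    also have "\<dots> \<le> integral {s..r} (\<lambda>r. norm (g r))"
      by (rule integral_norm_bound_integral[OF gi' ngi']) auto
    also have "\<dots> \<le> \<Gamma>"
    proof -
      have "integral {s..r} (\<lambda>r. norm (g r)) + integral {r..u} (\<lambda>r. norm (g r)) = \<Gamma>"
        unfolding \<Gamma>_def using Henstock_Kurzweil_Integration.integral_combine[where a=s and c=r and b=u and f="\<lambda>r. norm (g r)"] r ngi by auto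
      moreover have "0 \<le> integral {r..u} (\<lambda>r. norm (g r))" by (rule integral_nonneg[OF ngi'']) auto
      ultimately show ?thesis by linarith
    qed
    finally show ?thesis .
  qed
  have sq: "(norm (D r))\<^sup>2 \<le> (norm (D s))\<^sup>2 + 2  *  \<Gamma>" if r: "r \<in> {s..u}" for r
  proof -
    have "(norm (D r))\<^sup>2 - (norm (D s))\<^sup>2 = (norm (D r) + norm (D s))  *  (norm (D r) - norm (D s))"
      by (simp add: power2_eq_square algebra_simps)
    also have "\<dots> \<le> 2  *  \<Gamma>"
    proof -
      have a: "norm (D r) + norm (D s) \<le> 2" using Db[OF r] Db[of s] ss by auto
      have b: "norm (D r) - norm (D s) \<le> \<Gamma>" using Dr[OF r] norm_triangle_ineq2[of "D r" "D s"] by linarith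
      show ?thesis
      proof (cases "norm (D r) - norm (D s) \<ge> 0")
        case True
        then show ?thesis using mult_mono[OF a b] G0 by auto
      next
        case False
        then show ?thesis using G0 by (smt (verit) norm_ge_zero mult_nonneg_nonpos) 
      qed
    qed
    finally show ?thesis by linarith
  qed
  define C where "C = 2 * e + 2 * K * (norm (D s))\<^sup>2 + 4 * K * \<Gamma>"
  have pw: "(D u + D s) \<bullet> g r \<le> C + 3 * \<Gamma>  *  norm (g r)" if r: "r \<in> {s..u}" for r
  proof -
    have uin: "u \<in> {s..u}" using ss by auto
    have eq: "(D u + D s) \<bullet> g r = 2  *  (D r \<bullet> g r) + ((D u - D r) + (D s - D r)) \<bullet> g r"
      by (simp add: algebra_simps inner_add_left inner_diff_left)
    have n1: "norm (D u - D r) \<le> 2 * \<Gamma>"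
      using Dr[OF r] Dr[OF uin] norm_triangle_ineq4[of "D u - D s" "D r - D s"] by (simp add: algebra_simps) 
    have n2: "norm (D s - D r) \<le> \<Gamma>" using Dr[OF r] by (simp add: norm_minus_commute)
    have "((D u - D r) + (D s - D r)) \<bullet> g r \<le> norm ((D u - D r) + (D s - D r))  *  norm (g r)"
      by (rule Cauchy_Schwarz_ineq2[THEN abs_le_D1])
    also have "\<dots> \<le> 3 * \<Gamma>  *  norm (g r)"
      by (rule mult_right_mono) (use norm_triangle_ineq[of "D u - D r" "D s - D r"] n1 n2 in auto)
    finally have t2: "((D u - D r) + (D s - D r)) \<bullet> g r \<le> 3 * \<Gamma>  *  norm (g r)" .
    have t1: "D r \<bullet> g r \<le> e + K  *  ((norm (D s))\<^sup>2 + 2  *  \<Gamma>)"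
      using mono[OF r] mult_left_mono[OF sq[OF r], of K] K by linarith
    show ?thesis unfolding eq C_def using t1 t2 by (simp add: algebra_simps)
  qed
  have "(norm (D u))\<^sup>2 - (norm (D s))\<^sup>2 = (D u + D s) \<bullet> (D u - D s)"
    by (simp add: inner_add_left inner_add_right inner_diff_right inner_diff_left power2_norm_eq_inner inner_commute)
  also have "\<dots> = (D u + D s) \<bullet> integral {s..u} g" using Deq[of u] ss by simp
  also have "\<dots> = integral {s..u} (\<lambda>r. (D u + D s) \<bullet> g r)"
    using integral_component_eq[OF gi, of "D u + D s"] by (simp add: inner_commute)
  also have "\<dots> \<le> integral {s..u} (\<lambda>r. C + 3 * \<Gamma>  *  norm (g r))"
  proof (rule integral_le)
    show "(\<lambda>r. (D u + D s) \<bullet> g r) integrable_on {s..u}"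
      using integrable_component[OF gi, of "D u + D s"] by (simp add: inner_commute)
    show "(\<lambda>r. C + 3 * \<Gamma>  *  norm (g r)) integrable_on {s..u}"
      by (intro integrable_add integrable_cmul) (auto intro: ngi integrable_on_mult_right)
  qed (use pw in auto)
  also have "\<dots> = (u - s)  *  C + 3 * \<Gamma> * \<Gamma>"
  proof -
    have "integral {s..u} (\<lambda>r. C + 3 * \<Gamma>  *  norm (g r)) = integral {s..u} (\<lambda>r. C) + integral {s..u} (\<lambda>r. 3 * \<Gamma>  *  norm (g r))"
      by (rule integral_add) (auto intro: ngi integrable_on_mult_right)
    also have "integral {s..u} (\<lambda>r. 3 * \<Gamma>  *  norm (g r)) = 3 * \<Gamma> * \<Gamma>"
      unfolding \<Gamma>_def by (rule integral_mult_right)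
    finally show ?thesis using ss by simp
  qed
  finally have key: "(norm (D u))\<^sup>2 \<le> (norm (D s))\<^sup>2 + (u-s)  *  C + 3 * \<Gamma> * \<Gamma>" by linarith
  define X where "X = (norm (D s))\<^sup>2 + e/K"
  have X0: "0 \<le> X" unfolding X_def using e K by auto
  define err where "err = \<Gamma>  *  (4 * K * (u-s) + 3 * \<Gamma>)"
  have err0: "0 \<le> err" unfolding err_def using G0 K ss by auto
  have "(norm (D u))\<^sup>2 + e/K \<le> X  *  (1 + 2 * K * (u-s)) + err"
    using key K unfolding X_def err_def C_def by (simp add: algebra_simps)
  hence "exp (-2 * K * u)  *  ((norm (D u))\<^sup>2 + e/K) \<le> exp (-2 * K * u)  *  (X  *  (1 + 2 * K * (u-s)) + err)"
    by (rule mult_left_mono) simp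
  also have "\<dots> = (exp (-2 * K * u)  *  (1 + 2 * K * (u-s)))  *  X + exp (-2 * K * u)  *  err"
    by (simp add: algebra_simps)
  also have "\<dots> \<le> exp (-2 * K * s)  *  X + err"
  proof (rule add_mono)
    have "exp (-2 * K * u)  *  (1 + 2 * K * (u-s)) \<le> exp (-2 * K * u)  *  exp (2 * K * (u-s))"
      by (rule mult_left_mono) (auto intro: exp_ge_add_one_self)
    also have "\<dots> = exp (-2 * K * s)" by (simp add: exp_add[symmetric] algebra_simps)
    finally show "(exp (-2 * K * u)  *  (1 + 2 * K * (u-s)))  *  X \<le> exp (-2 * K * s)  *  X"
      by (rule mult_right_mono[OF _ X0])
    have "exp (-2 * K * u) \<le> 1" using K s0 ss by simp
    then show "exp (-2 * K * u)  *  err \<le> err" using err0 by (simp add: mult_left_le_one_le)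
  qed
  finally show ?thesis unfolding X_def err_def \<Gamma>_def .
qed

lemma stab:
  fixes g D :: "real \<Rightarrow> 'a::euclidean_space"
  assumes t: "0 \<le> t" and K: "0 < K" and e: "0 \<le> e"
    and gi: "g integrable_on {0..t}" and ngi: "(\<lambda>r. norm (g r)) integrable_on {0..t}"
    and Deq: "\<And>s. s \<in> {0..t} \<Longrightarrow> D s = D 0 + integral {0..s} g"
    and mono: "\<And>r. r \<in> {0..t} \<Longrightarrow> norm (D r) \<le> 1 \<Longrightarrow> D r \<bullet> g r \<le> e + K * (norm (D r))\<^sup>2"
    and small: "exp (2 * K * t) * ((norm (D 0))\<^sup>2 + e / K) < 1/4"
  shows "(norm (D t))\<^sup>2 \<le> exp (2 * K * t) * ((norm (D 0))\<^sup>2 + e / K)"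
proof -
  define G where "G s = integral {0..s} (\<lambda>r. norm (g r))" for s
  define a where "a = (norm (D 0))\<^sup>2 + e / K"
  define E where "E = exp (2 * K * t)"
  define \<Phi> where "\<Phi> s = exp (- 2 * K * s) * ((norm (D s))\<^sup>2 + e / K)" for s
  have E1: "1 \<le> E" unfolding E_def using K t by simp
  have a0: "0 \<le> a" unfolding a_def using K e by simp
  have \<Phi>0: "\<Phi> 0 = a" unfolding \<Phi>_def a_def by simp
  have gis: "g integrable_on {s..u}" if "0 \<le> s" "u \<le> t" for s u
    by (rule integrable_subinterval_real[OF gi]) (use that in auto)
  have ngis: "(\<lambda>r. norm (g r)) integrable_on {s..u}" if "0 \<le> s" "u \<le> t" for s u
    by (rule integrable_subinterval_real[OF ngi]) (use that in auto)
  have Gdiff: "integral {s..u} (\<lambda>r. norm (g r)) = G u - G s" if "0 \<le> s" "s \<le> u" "u \<le> t" for s u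
    using Henstock_Kurzweil_Integration.integral_combine[where a=0 and c=s and b=u and f="\<lambda>r. norm (g r)"]
      ngis[of 0 u] that unfolding G_def by auto
  have Gmono: "G s \<le> G u" if "0 \<le> s" "s \<le> u" "u \<le> t" for s u
  proof -
    have "0 \<le> integral {s..u} (\<lambda>r. norm (g r))"
      by (rule integral_nonneg[OF ngis]) (use that in auto)
    then show ?thesis using Gdiff[OF that] by simp
  qed
  have G0: "G 0 = 0" unfolding G_def by simp
  have Dloc: "D r = D s + integral {s..r} g" if "0 \<le> s" "s \<le> r" "r \<le> t" for s r
  proof -
    have "integral {0..s} g + integral {s..r} g = integral {0..r} g"
      using Henstock_Kurzweil_Integration.integral_combine[where a=0 and c=s and b=r and f=g] gis[of 0 r] that by auto
    then show ?thesis using Deq[of r] Deq[of s] that by (simp add: algebra_simps)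
  qed
  have Dinc: "norm (D r - D s) \<le> G r - G s" if "0 \<le> s" "s \<le> r" "r \<le> t" for s r
  proof -
    have "norm (D r - D s) = norm (integral {s..r} g)" using Dloc[OF that] by simp
    also have "\<dots> \<le> integral {s..r} (\<lambda>r. norm (g r))"
      by (rule integral_norm_bound_integral[OF gis ngis]) (use that in auto)
    finally show ?thesis using Gdiff[OF that] by simp
  qed
  have Gcont: "continuous_on {0..t} G"
    unfolding G_def by (rule indefinite_integral_continuous_1[OF ngi])
  have Gunif: "uniformly_continuous_on {0..t} G"
    by (rule compact_uniformly_continuous[OF Gcont]) simp
  have main: "(norm (D t))\<^sup>2 \<le> E * (a + \<eta> * G t)" if \<eta>: "0 < \<eta>" and \<eta>s: "E * (a + \<eta> * G t) \<le> 1/4" for \<eta>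
  proof -
    define \<rho> where "\<rho> = min (1/2) (\<eta> / 6)"
    have \<rho>: "0 < \<rho>" unfolding \<rho>_def using \<eta> by simp
    obtain d where d: "0 < d" and dG: "\<And>x y. x \<in> {0..t} \<Longrightarrow> y \<in> {0..t} \<Longrightarrow> dist y x < d \<Longrightarrow> dist (G y) (G x) < \<rho>"
      using Gunif \<rho> unfolding uniformly_continuous_on_def by metis
    define d' where "d' = min d (\<eta> / (8 * K))"
    have d': "0 < d'" unfolding d'_def using d \<eta> K by simp
    obtain N :: nat where N: "t / d' < real N" using reals_Archimedean2 by blast
    have Npos: "0 < N" using N t d' by (metis divide_nonneg_pos less_eq_real_def of_nat_0_less_iff order_le_less_trans)
    have step: "t / real N < d'" using N Npos d' t by (simp add: field_simps)
    define p where "p k = real k * t / real N" for k :: nat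
    have p_in: "0 \<le> p k \<and> p k \<le> t" if "k \<le> N" for k
      using that t Npos unfolding p_def by (auto simp: field_simps intro!: mult_left_mono)
    have p_step: "p (Suc k) - p k = t / real N" for k
      unfolding p_def by (simp add: field_simps add_divide_distrib)
    have ind: "\<Phi> (p k) \<le> a + \<eta> * G (p k)" if "k \<le> N" for k
      using that
    proof (induction k)
      case 0
      then show ?case using \<Phi>0 G0 unfolding p_def by simp
    next
      case (Suc k)
      define s where "s = p k"
      define u where "u = p (Suc k)"
      have kN: "k \<le> N" using Suc by simp
      have s: "0 \<le> s" "s \<le> t" using p_in[OF kN] unfolding s_def by auto
      have u: "0 \<le> u" "u \<le> t" using p_in[OF Suc.prems] unfolding u_def by auto
      have su: "s \<le> u" using p_step[of k] t Npos divide_nonneg_nonneg[of t "real N"] unfolding s_def u_def by linarith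
      have Delta: "u - s < d'" using p_step[of k] step unfolding s_def u_def by simp
      have IH: "\<Phi> s \<le> a + \<eta> * G s" using Suc.IH[OF kN] unfolding s_def .
      have Gs: "G s \<le> G t" using Gmono s by simp
      have Ds: "norm (D s) \<le> 1/2"
      proof -
        have "exp (- 2 * K * s) * ((norm (D s))\<^sup>2 + e / K) \<le> a + \<eta> * G s" using IH unfolding \<Phi>_def .
        then have "(norm (D s))\<^sup>2 + e / K \<le> exp (2 * K * s) * (a + \<eta> * G s)"
          by (simp add: exp_minus field_simps)
        also have "\<dots> \<le> E * (a + \<eta> * G t)"
        proof -
          have "exp (2 * K * s) \<le> E" unfolding E_def using s K by simp
          moreover have "a + \<eta> * G s \<le> a + \<eta> * G t" using Gs \<eta> by (simp add: mult_left_mono)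
          moreover have "0 \<le> a + \<eta> * G s" using a0 \<eta> G0 Gmono[of 0 s] s by simp
          ultimately show ?thesis using E1 by (intro mult_mono) auto
        qed
        finally have "(norm (D s))\<^sup>2 \<le> 1/4" using \<eta>s e K by (smt (verit) divide_nonneg_pos)
        then have "(norm (D s))\<^sup>2 \<le> (1/2)\<^sup>2" by (simp add: power2_eq_square)
        then show ?thesis by (rule power2_le_imp_le) simp
      qed
      have Gclose: "G r - G s \<le> \<rho>" if r: "r \<in> {s..u}" for r
      proof -
        have "dist r s < d" using r Delta d'_def by (auto simp: dist_real_def)
        then have "dist (G r) (G s) < \<rho>" using dG[of s r] r s u by auto
        then show ?thesis by (simp add: dist_real_def)
      qed
      have Db: "norm (D r) \<le> 1" if r: "r \<in> {s..u}" for r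
      proof -
        have "norm (D r) \<le> norm (D s) + norm (D r - D s)" by (metis norm_triangle_sub add.commute)
        also have "\<dots> \<le> 1/2 + \<rho>" using Ds Dinc[of s r] Gclose[OF r] r s u by auto
        finally show ?thesis unfolding \<rho>_def by linarith
      qed
      have st: "\<Phi> u \<le> \<Phi> s + integral {s..u} (\<lambda>r. norm (g r)) * (4 * K * (u - s) + 3 * integral {s..u} (\<lambda>r. norm (g r)))"
        unfolding \<Phi>_def
      proof (rule stab_step[OF K e s(1) su gis[OF s(1) u(2)] ngis[OF s(1) u(2)]])
        show "D r = D s + integral {s..r} g" if "r \<in> {s..u}" for r using Dloc[of s r] that s u by auto
        show "norm (D r) \<le> 1" if "r \<in> {s..u}" for r using Db that by auto
        show "D r \<bullet> g r \<le> e + K * (norm (D r))\<^sup>2" if "r \<in> {s..u}" for r using mono[of r] Db[OF that] that s u by auto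
      qed
      define \<Gamma> where "\<Gamma> = G u - G s"
      have \<Gamma>: "0 \<le> \<Gamma>" "\<Gamma> \<le> \<rho>" using Gmono[OF s(1) su u(2)] Gclose[of u] su unfolding \<Gamma>_def by auto
      have "4 * K * (u - s) \<le> \<eta> / 2"
      proof -
        have "u - s \<le> \<eta> / (8 * K)" using Delta unfolding d'_def by simp
        then have "4 * K * (u - s) \<le> 4 * K * (\<eta> / (8 * K))" using K by (intro mult_left_mono) auto
        then show ?thesis using K by simp
      qed
      moreover have "3 * \<Gamma> \<le> \<eta> / 2" using \<Gamma> unfolding \<rho>_def by simp
      ultimately have "\<Gamma> * (4 * K * (u - s) + 3 * \<Gamma>) \<le> \<Gamma> * \<eta>"
        using \<Gamma> by (intro mult_left_mono) auto
      then have "\<Phi> u \<le> \<Phi> s + \<eta> * (G u - G s)"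
        using st Gdiff[OF s(1) su u(2)] unfolding \<Gamma>_def by (simp add: algebra_simps)
      then show ?case using IH unfolding u_def s_def by (simp add: algebra_simps)
    qed
    have pN: "p N = t" unfolding p_def using Npos by simp
    have "\<Phi> t \<le> a + \<eta> * G t" using ind[of N] pN by simp
    then have "(norm (D t))\<^sup>2 + e / K \<le> E * (a + \<eta> * G t)"
      unfolding \<Phi>_def E_def by (simp add: exp_minus field_simps)
    then show ?thesis using e K by (smt (verit) divide_nonneg_pos)
  qed
  have Gt: "0 \<le> G t" using Gmono[of 0 t] G0 t by simp
  have "(norm (D t))\<^sup>2 \<le> E * a + \<epsilon>" if \<epsilon>: "0 < \<epsilon>" for \<epsilon>
  proof -
    have Ea: "E * a < 1/4" using small unfolding E_def a_def .
    define \<eta> where "\<eta> = min (\<epsilon> / (E * (G t + 1))) ((1/4 - E * a) / (E * (G t + 1)))"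
    have EG: "0 < E * (G t + 1)" using E1 Gt by simp
    have \<eta>: "0 < \<eta>" unfolding \<eta>_def using \<epsilon> Ea EG by simp
    have "E * (\<eta> * G t) \<le> E * (\<eta> * (G t + 1))" using E1 \<eta> by (intro mult_left_mono) auto
    also have "\<dots> = \<eta> * (E * (G t + 1))" by simp
    finally have b1: "E * (\<eta> * G t) \<le> \<eta> * (E * (G t + 1))" .
    have b2: "\<eta> * (E * (G t + 1)) \<le> \<epsilon>" "\<eta> * (E * (G t + 1)) \<le> 1/4 - E * a"
    proof -
      have "\<eta> \<le> \<epsilon> / (E * (G t + 1))" "\<eta> \<le> (1/4 - E * a) / (E * (G t + 1))" unfolding \<eta>_def by auto
      then show "\<eta> * (E * (G t + 1)) \<le> \<epsilon>" "\<eta> * (E * (G t + 1)) \<le> 1/4 - E * a"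
        using EG by (simp_all add: pos_le_divide_eq)
    qed
    have "E * (a + \<eta> * G t) \<le> 1/4" using b1 b2 by (simp add: algebra_simps)
    then have "(norm (D t))\<^sup>2 \<le> E * (a + \<eta> * G t)" using main \<eta> by blast
    then show ?thesis using b1 b2 by (simp add: algebra_simps)
  qed
  then show ?thesis unfolding E_def a_def by (rule field_le_epsilon)
qed
lemma si_conv:
  fixes f :: "real \<Rightarrow> 'a::euclidean_space"
  assumes "set_integrable lborel {0..t} f"
  shows "f integrable_on {0..t}" "(\<lambda>r. norm (f r)) integrable_on {0..t}"
    and "\<And>s. s \<in> {0..t} \<Longrightarrow> (LINT r:{0..s}|lborel. f r) = integral {0..s} f"
proof -
  show "f integrable_on {0..t}" by (rule set_borel_integral_eq_integral(1)[OF assms])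
  have "set_integrable lborel {0..t} (\<lambda>r. norm (f r))"
  proof -
    have "integrable lborel (\<lambda>x. norm (indicator {0..t} x *\<^sub>R f x))"
      using assms unfolding set_integrable_def by (rule integrable_norm)
    moreover have "(\<lambda>x. norm (indicator {0..t} x *\<^sub>R f x)) = (\<lambda>x. indicator {0..t} x *\<^sub>R norm (f x))"
      by (auto simp: indicator_def)
    ultimately show ?thesis unfolding set_integrable_def by simp
  qed
  then show "(\<lambda>r. norm (f r)) integrable_on {0..t}" by (rule set_borel_integral_eq_integral(1))
  fix s assume s: "s \<in> {0..t}"
  have "set_integrable lborel {0..s} f"
    by (rule set_integrable_subset[OF assms]) (use s in auto)
  then show "(LINT r:{0..s}|lborel. f r) = integral {0..s} f" by (rule set_borel_integral_eq_integral(2))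
qed

lemma path_conv:
  fixes z :: "real \<Rightarrow> 'a::euclidean_space" and bb :: "'a \<Rightarrow> 'a" and bs :: "nat \<Rightarrow> 'a \<Rightarrow> 'a"
    and y :: "real \<Rightarrow> 'a" and ys :: "nat \<Rightarrow> real \<Rightarrow> 'a"
  assumes t: "0 \<le> t"
    and zB: "\<forall>s\<in>{0..t}. norm (z s) \<le> Bz"
    and yi: "set_integrable lborel {0..t} (\<lambda>r. bb (y r))"
    and ye: "\<And>s. s \<in> {0..t} \<Longrightarrow> y s = x + (LINT r:{0..s}|lborel. bb (y r)) + z s"
    and ysi: "\<And>k. set_integrable lborel {0..t} (\<lambda>r. bs k (ys k r))"
    and yse: "\<And>k s. s \<in> {0..t} \<Longrightarrow> ys k s = xs k + (LINT r:{0..s}|lborel. bs k (ys k r)) + z s"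
    and mono: "\<And>n. n \<ge> (1::nat) \<Longrightarrow> \<exists>K>0. \<forall>u v. max (norm u) (norm v) \<le> real n \<longrightarrow>
                 (u - v) \<bullet> (bb u - bb v) \<le> K * (norm (u - v))\<^sup>2"
    and conv: "\<And>n \<epsilon>. n \<ge> (1::nat) \<Longrightarrow> \<epsilon> > 0 \<Longrightarrow>
                 eventually (\<lambda>k. \<forall>u. norm u \<le> real n \<longrightarrow> norm (bs k u - bb u) \<le> \<epsilon>) sequentially"
    and xs: "xs \<longlonglongrightarrow> x"
  shows "(\<lambda>k. ys k t) \<longlonglongrightarrow> y t"
proof -
  note yc = si_conv[OF yi]
  define R0 where "R0 = norm x + integral {0..t} (\<lambda>r. norm (bb (y r))) + Bz"
  have yB: "norm (y s) \<le> R0" if s: "s \<in> {0..t}" for s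
  proof -
    have "norm (integral {0..s} (\<lambda>r. bb (y r))) \<le> integral {0..s} (\<lambda>r. norm (bb (y r)))"
      by (rule integral_norm_bound_integral) (use yc s in \<open>auto intro: integrable_subinterval_real\<close>)
    also have "\<dots> \<le> integral {0..t} (\<lambda>r. norm (bb (y r)))"
      by (rule integral_subset_le) (use yc s in \<open>auto intro: integrable_subinterval_real\<close>)
    finally have "norm (integral {0..s} (\<lambda>r. bb (y r))) \<le> integral {0..t} (\<lambda>r. norm (bb (y r)))" .
    moreover have "norm (z s) \<le> Bz" using zB s by blast
    moreover have "y s = x + integral {0..s} (\<lambda>r. bb (y r)) + z s" using ye[OF s] yc(3)[OF s] by simp
    ultimately show ?thesis
      using norm_triangle_ineq[of "x + integral {0..s} (\<lambda>r. bb (y r))" "z s"]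
        norm_triangle_ineq[of x "integral {0..s} (\<lambda>r. bb (y r))"]
      unfolding R0_def by (smt (verit))
  qed
  define N where "N = nat \<lceil>R0\<rceil> + 1"
  have N1: "N \<ge> 1" unfolding N_def by simp
  have RN: "R0 + 1 \<le> real N" unfolding N_def by linarith
  obtain K where K: "K > 0" and Kmono: "\<And>u v. max (norm u) (norm v) \<le> real N \<Longrightarrow>
                 (u - v) \<bullet> (bb u - bb v) \<le> K * (norm (u - v))\<^sup>2"
    using mono[OF N1] by blast
  define E where "E = exp (2 * K * t)"
  have E1: "E \<ge> 1" unfolding E_def using K t by simp
  show ?thesis
  proof (rule LIMSEQ_I)
    fix \<eta> :: real assume \<eta>: "0 < \<eta>"
    define q where "q = min (\<eta>\<^sup>2) (1/4)"
    have q: "0 < q" "q \<le> \<eta>\<^sup>2" "q \<le> 1/4" unfolding q_def using \<eta> by auto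
    define \<epsilon> where "\<epsilon> = q * K / (2 * E)"
    have \<epsilon>: "0 < \<epsilon>" unfolding \<epsilon>_def using q K E1 by simp
    have E\<epsilon>: "E * (\<epsilon> / K) = q / 2" unfolding \<epsilon>_def using K E1 by (simp add: field_simps)
    have ev1: "eventually (\<lambda>k. \<forall>u. norm u \<le> real N \<longrightarrow> norm (bs k u - bb u) \<le> \<epsilon>) sequentially"
      using conv[OF N1 \<epsilon>] .
    have "(\<lambda>k. (norm (xs k - x))\<^sup>2) \<longlonglongrightarrow> (norm (x - x))\<^sup>2"
      by (intro tendsto_intros xs)
    then have "eventually (\<lambda>k. (norm (xs k - x))\<^sup>2 < q / (2 * E)) sequentially"
      using q E1 by (intro order_tendstoD(2)[where y=0]) auto
    with ev1 have "eventually (\<lambda>k. norm (ys k t - y t) < \<eta>) sequentially"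
    proof eventually_elim
      case (elim k)
      have bconv: "\<And>u. norm u \<le> real N \<Longrightarrow> norm (bs k u - bb u) \<le> \<epsilon>" using elim(1) by blast
      define g where "g r = bs k (ys k r) - bb (y r)" for r
      define D where "D s = ys k s - y s" for s
      note ysc = si_conv[OF ysi[of k]]
      have gsi: "set_integrable lborel {0..t} g" unfolding g_def using ysi[of k] yi by (rule set_integral_diff)
      note gc = si_conv[OF gsi]
      have Deq0: "D s = (xs k - x) + integral {0..s} g" if s: "s \<in> {0..t}" for s
      proof -
        have "integral {0..s} g = integral {0..s} (\<lambda>r. bs k (ys k r)) - integral {0..s} (\<lambda>r. bb (y r))"
          unfolding g_def
          by (rule integral_diff) (use yc ysc s in \<open>auto intro: integrable_subinterval_real\<close>)
        then show ?thesis unfolding D_def using yse[OF s] ye[OF s] yc(3)[OF s] ysc(3)[OF s] by simp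
      qed
      have D0: "D 0 = xs k - x" using Deq0[of 0] t by simp
      have Deq: "D s = D 0 + integral {0..s} g" if "s \<in> {0..t}" for s using Deq0[OF that] D0 by simp
      have Dmono: "D r \<bullet> g r \<le> \<epsilon> + K * (norm (D r))\<^sup>2" if r: "r \<in> {0..t}" and Dr: "norm (D r) \<le> 1" for r
      proof -
        have yr: "norm (y r) \<le> R0" using yB[OF r] .
        have ysr: "norm (ys k r) \<le> R0 + 1"
          using Dr yr norm_triangle_ineq[of "y r" "D r"] unfolding D_def by simp
        have split: "D r \<bullet> g r = D r \<bullet> (bs k (ys k r) - bb (ys k r)) + (ys k r - y r) \<bullet> (bb (ys k r) - bb (y r))"
          unfolding g_def D_def by (simp add: inner_diff_right)
        have "D r \<bullet> (bs k (ys k r) - bb (ys k r)) \<le> norm (D r) * norm (bs k (ys k r) - bb (ys k r))"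
          by (rule Cauchy_Schwarz_ineq2[THEN abs_le_D1])
        also have "\<dots> \<le> 1 * \<epsilon>"
          by (rule mult_mono) (use Dr bconv[of "ys k r"] ysr RN in auto)
        finally have p1: "D r \<bullet> (bs k (ys k r) - bb (ys k r)) \<le> \<epsilon>" by simp
        have p2: "(ys k r - y r) \<bullet> (bb (ys k r) - bb (y r)) \<le> K * (norm (D r))\<^sup>2"
          using Kmono[of "ys k r" "y r"] ysr yr RN unfolding D_def by auto
        show ?thesis using split p1 p2 by simp
      qed
      have small: "exp (2 * K * t) * ((norm (D 0))\<^sup>2 + \<epsilon> / K) < 1/4"
      proof -
        have "E * (norm (D 0))\<^sup>2 < E * (q / (2 * E))"
          using elim(2) D0 E1 by (intro mult_strict_left_mono) auto
        also have "\<dots> = q / 2" using E1 by simp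
        finally have "E * ((norm (D 0))\<^sup>2 + \<epsilon> / K) < q"
          using E\<epsilon> by (simp add: distrib_left)
        then show ?thesis using q unfolding E_def by linarith
      qed
      have "(norm (D t))\<^sup>2 \<le> exp (2 * K * t) * ((norm (D 0))\<^sup>2 + \<epsilon> / K)"
        by (rule stab[OF t K less_imp_le[OF \<epsilon>] gc(1) gc(2) Deq Dmono small]) auto
      also have "\<dots> < q"
      proof -
        have "E * (norm (D 0))\<^sup>2 < E * (q / (2 * E))"
          using elim(2) D0 E1 by (intro mult_strict_left_mono) auto
        also have "\<dots> = q / 2" using E1 by simp
        finally have "E * (norm (D 0))\<^sup>2 < q / 2" .
        moreover have "E * ((norm (D 0))\<^sup>2 + \<epsilon> / K) = E * (norm (D 0))\<^sup>2 + E * (\<epsilon> / K)"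
          by (simp add: distrib_left)
        ultimately have "E * ((norm (D 0))\<^sup>2 + \<epsilon> / K) < q" using E\<epsilon> by linarith
        then show ?thesis unfolding E_def .
      qed
      also have "\<dots> \<le> \<eta>\<^sup>2" using q by simp
      finally have "(norm (D t))\<^sup>2 < \<eta>\<^sup>2" .
      then have "norm (D t) < \<eta>" using \<eta> by (simp add: power_less_imp_less_base)
      then show ?case unfolding D_def .
    qed
    then show "\<exists>no. \<forall>n\<ge>no. norm (ys n t - y t) < \<eta>" by (simp add: eventually_sequentially)
  qed
qed


lemma cadlag_local_bound:
  fixes z :: "real \<Rightarrow> 'a::real_normed_vector"
  assumes rc: "continuous (at_right s) z"
    and ll: "0 < s \<Longrightarrow> \<exists>l. (z \<longlongrightarrow> l) (at_left s)"
  shows "\<exists>d>0. \<exists>B. \<forall>r. 0 \<le> r \<longrightarrow> \<bar>r - s\<bar> < d \<longrightarrow> norm (z r) \<le> B"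
proof -
  have "(z \<longlongrightarrow> z s) (at_right s)" using rc by (simp add: continuous_within)
  then have "eventually (\<lambda>r. dist (z r) (z s) < 1) (at_right s)"
    by (rule tendstoD) simp
  then obtain b1 where b1: "b1 > s" "\<And>y. y > s \<Longrightarrow> y < b1 \<Longrightarrow> dist (z y) (z s) < 1"
    unfolding eventually_at_right_field by blast
  obtain b2 l where b2: "b2 < s" "\<And>y. y > b2 \<Longrightarrow> y < s \<Longrightarrow> 0 \<le> y \<Longrightarrow> dist (z y) l < 1"
  proof (cases "0 < s")
    case True
    then obtain l where "(z \<longlongrightarrow> l) (at_left s)" using ll by blast
    then have "eventually (\<lambda>r. dist (z r) l < 1) (at_left s)"
      by (rule tendstoD) simp
    then obtain b where "b < s" "\<And>y. y > b \<Longrightarrow> y < s \<Longrightarrow> dist (z y) l < 1"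
      unfolding eventually_at_left_field by blast
    then show ?thesis using that by blast
  next
    case False
    show ?thesis by (rule that[of "s - 1" 0]) (use False in auto)
  qed
  define d where "d = min (b1 - s) (s - b2)"
  define B where "B = max (norm (z s) + 1) (norm l + 1)"
  have "\<forall>r. 0 \<le> r \<longrightarrow> \<bar>r - s\<bar> < d \<longrightarrow> norm (z r) \<le> B"
  proof (intro allI impI)
    fix r assume r0: "0 \<le> r" and rd: "\<bar>r - s\<bar> < d"
    consider "r = s" | "r > s" | "r < s" by linarith
    then show "norm (z r) \<le> B"
    proof cases
      case 1 then show ?thesis unfolding B_def by simp
    next
      case 2
      then have "dist (z r) (z s) < 1" using b1 rd unfolding d_def by auto
      then show ?thesis unfolding B_def by (smt (verit) dist_norm norm_triangle_ineq2)
    next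
      case 3
      then have "dist (z r) l < 1" using b2 rd r0 unfolding d_def by auto
      then show ?thesis unfolding B_def by (smt (verit) dist_norm norm_triangle_ineq2)
    qed
  qed
  moreover have "d > 0" unfolding d_def using b1 b2 by simp
  ultimately show ?thesis by blast
qed

lemma cadlag_bounded:
  fixes z :: "real \<Rightarrow> 'a::real_normed_vector"
  assumes rc: "\<And>s. 0 \<le> s \<Longrightarrow> continuous (at_right s) z"
    and ll: "\<And>s. 0 < s \<Longrightarrow> \<exists>l. (z \<longlongrightarrow> l) (at_left s)"
  shows "\<exists>B. \<forall>s\<in>{0..T}. norm (z s) \<le> B"
proof -
  have "\<forall>s\<in>{0..T}. \<exists>d>0. \<exists>B. \<forall>r. 0 \<le> r \<longrightarrow> \<bar>r - s\<bar> < d \<longrightarrow> norm (z r) \<le> B"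
    using cadlag_local_bound[OF rc ll] by auto
  then obtain d B where dB: "\<And>s. s \<in> {0..T} \<Longrightarrow> d s > 0 \<and> (\<forall>r. 0 \<le> r \<longrightarrow> \<bar>r - s\<bar> < d s \<longrightarrow> norm (z r) \<le> B s)"
    by metis
  have cov: "{0..T} \<subseteq> (\<Union>s\<in>{0..T}. ball s (d s))"
  proof
    fix x assume "x \<in> {0..T}"
    then show "x \<in> (\<Union>s\<in>{0..T}. ball s (d s))" using dB[of x] by force
  qed
  obtain C where C: "C \<subseteq> {0..T}" "finite C" "{0..T} \<subseteq> (\<Union>c\<in>C. ball c (d c))"
    using compactE_image[OF compact_Icc _ cov] by blast
  have "\<forall>s\<in>{0..T}. norm (z s) \<le> (\<Sum>c\<in>C. \<bar>B c\<bar>)"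
  proof
    fix s assume s: "s \<in> {0..T}"
    then obtain c where c: "c \<in> C" "s \<in> ball c (d c)" using C by blast
    then have "norm (z s) \<le> B c" using dB[of c] C(1) s by (auto simp: dist_real_def)
    also have "\<dots> \<le> \<bar>B c\<bar>" by simp
    also have "\<dots> \<le> (\<Sum>c\<in>C. \<bar>B c\<bar>)" by (rule member_le_sum) (use c C in auto)
    finally show "norm (z s) \<le> (\<Sum>c\<in>C. \<bar>B c\<bar>)" .
  qed
  then show ?thesis by blast
qed


lemma kernel_invariant_integral:
  fixes Kx :: "'a::euclidean_space \<Rightarrow> 'a measure" and \<pi> :: "'a measure" and f :: "'a \<Rightarrow> real"
  assumes \<pi>: "prob_space \<pi>" "sets \<pi> = sets borel"
    and Kp: "\<And>x. prob_space (Kx x)" and Ks: "\<And>x. sets (Kx x) = sets borel"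
    and Km: "\<And>A. A \<in> sets borel \<Longrightarrow> (\<lambda>x. measure (Kx x) A) \<in> borel_measurable borel"
    and inv: "\<And>A. A \<in> sets borel \<Longrightarrow> (\<integral>x. measure (Kx x) A \<partial>\<pi>) = measure \<pi> A"
    and fm: "f \<in> borel_measurable borel" and fb: "\<And>x. \<bar>f x\<bar> \<le> B"
  shows "(\<integral>x. (\<integral>y. f y \<partial>Kx x) \<partial>\<pi>) = (\<integral>x. f x \<partial>\<pi>)"
proof -
  interpret P: prob_space \<pi> by (rule \<pi>(1))
  have mc: "measurable \<pi> (borel :: real measure) = measurable borel borel" by (rule measurable_cong_sets[OF \<pi>(2) refl])
  have Keq: "emeasure (Kx x) A = ennreal (measure (Kx x) A)" for x A
  proof -
    interpret K: prob_space "Kx x" by (rule Kp)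
    show ?thesis by (rule K.emeasure_eq_measure)
  qed
  have Kmeas: "Kx \<in> measurable \<pi> (subprob_algebra borel)"
  proof (rule measurable_subprob_algebra)
    show "subprob_space (Kx a)" for a using Kp[of a] by (simp add: prob_space_imp_subprob_space)
    show "sets (Kx a) = sets borel" for a by (rule Ks)
    fix A :: "'a set" assume A: "A \<in> sets borel"
    have "(\<lambda>x. emeasure (Kx x) A) = (\<lambda>x. ennreal (measure (Kx x) A))"
      using Keq by simp
    moreover have "(\<lambda>x. measure (Kx x) A) \<in> borel_measurable \<pi>"
      using Km[OF A] mc by simp
    then have "(\<lambda>x. ennreal (measure (Kx x) A)) \<in> borel_measurable \<pi>" by measurable
    ultimately show "(\<lambda>x. emeasure (Kx x) A) \<in> borel_measurable \<pi>" by simp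
  qed
  have bind_eq: "\<pi> \<bind> Kx = \<pi>"
  proof (rule measure_eqI)
    have ne: "space \<pi> \<noteq> {}" by (rule P.not_empty)
    show sb: "sets (\<pi> \<bind> Kx) = sets \<pi>"
      using sets_bind[OF _ ne, of Kx borel] Ks \<pi>(2) by simp
    fix A assume "A \<in> sets (\<pi> \<bind> Kx)"
    then have A: "A \<in> sets borel" using sb \<pi>(2) by simp
    have "emeasure (\<pi> \<bind> Kx) A = (\<integral>\<^sup>+x. emeasure (Kx x) A \<partial>\<pi>)"
      by (rule emeasure_bind[OF ne Kmeas A])
    also have "\<dots> = (\<integral>\<^sup>+x. ennreal (measure (Kx x) A) \<partial>\<pi>)"
      using Keq by simp
    also have "\<dots> = ennreal (\<integral>x. measure (Kx x) A \<partial>\<pi>)"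
    proof (rule nn_integral_eq_integral)
      show "integrable \<pi> (\<lambda>x. measure (Kx x) A)"
      proof (rule P.integrable_const_bound[where B=1])
        show "AE x in \<pi>. norm (measure (Kx x) A) \<le> 1" using Kp by (simp add: prob_space.prob_le_1)
        show "(\<lambda>x. measure (Kx x) A) \<in> borel_measurable \<pi>"
          using Km[OF A] mc by simp
      qed
    qed simp
    also have "\<dots> = emeasure \<pi> A" using inv[OF A] by (simp add: P.emeasure_eq_measure)
    finally show "emeasure (\<pi> \<bind> Kx) A = emeasure \<pi> A" .
  qed
  have "(\<integral>x. f x \<partial>(\<pi> \<bind> Kx)) = (\<integral>x. (\<integral>y. f y \<partial>Kx x) \<partial>\<pi>)"
  proof (rule integral_bind[where K=borel and B=B and B'=1])
    show "f \<in> borel_measurable borel" by (rule fm)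
    show "\<And>x. x \<in> space borel \<Longrightarrow> \<bar>f x\<bar> \<le> B" using fb by simp
    show "Kx \<in> measurable \<pi> (subprob_algebra borel)" by (rule Kmeas)
    show "finite_measure \<pi>" by (rule P.finite_measure_axioms)
    show "AE x in \<pi>. emeasure (Kx x) (space (Kx x)) \<le> ennreal 1"
      using Kp by (simp add: prob_space.emeasure_space_1)
  qed
  then show ?thesis using bind_eq by simp
qed

lemma var_norm_bound:
  fixes P Q :: "'a::euclidean_space measure" and f :: "'a \<Rightarrow> real"
  assumes P: "prob_space P" "sets P = sets borel" and Q: "prob_space Q" "sets Q = sets borel"
    and fm: "f \<in> borel_measurable borel" and fb: "\<And>x. \<bar>f x\<bar> \<le> B" and B: "0 < B"
  shows "\<bar>(\<integral>x. f x \<partial>P) - (\<integral>x. f x \<partial>Q)\<bar> \<le> B * var_norm_diff P Q"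
proof -
  define S where "S = {f :: 'a \<Rightarrow> real. f \<in> borel_measurable borel \<and> (\<forall>x. \<bar>f x\<bar> \<le> 1)}"
  have int1: "\<bar>\<integral>x. g x \<partial>R\<bar> \<le> 1" if R: "prob_space R" "sets R = sets borel" and g: "g \<in> S" for g R
  proof -
    interpret R: prob_space R by (rule R(1))
    have gm: "g \<in> borel_measurable R" using g R(2) measurable_cong_sets[OF R(2) refl] unfolding S_def by auto
    have "\<bar>\<integral>x. g x \<partial>R\<bar> \<le> (\<integral>x. \<bar>g x\<bar> \<partial>R)" by (rule integral_abs_bound)
    also have "\<dots> \<le> (\<integral>x. 1 \<partial>R)"
    proof (rule integral_mono)
      show "integrable R (\<lambda>x. \<bar>g x\<bar>)" using gm g unfolding S_def
        by (intro R.integrable_const_bound[where B=1]) auto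
    qed (use g in \<open>auto simp: S_def\<close>)
    also have "\<dots> = 1" by (simp add: R.prob_space)
    finally show ?thesis .
  qed
  have bdd: "bdd_above ((\<lambda>g. \<bar>(\<integral>x. g x \<partial>P) - (\<integral>x. g x \<partial>Q)\<bar>) ` S)"
  proof (rule bdd_aboveI2[where M=2])
    fix g assume "g \<in> S"
    then show "\<bar>(\<integral>x. g x \<partial>P) - (\<integral>x. g x \<partial>Q)\<bar> \<le> 2" using int1[OF P] int1[OF Q] by fastforce
  qed
  have fS: "(\<lambda>x. f x / B) \<in> S" unfolding S_def using fm fb B by (auto simp: divide_le_eq)
  have "\<bar>(\<integral>x. f x / B \<partial>P) - (\<integral>x. f x / B \<partial>Q)\<bar> \<le> var_norm_diff P Q"
    unfolding var_norm_diff_def S_def[symmetric] by (rule cSUP_upper[OF fS bdd])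
  moreover have "\<bar>(\<integral>x. f x / B \<partial>P) - (\<integral>x. f x / B \<partial>Q)\<bar> = \<bar>(\<integral>x. f x \<partial>P) - (\<integral>x. f x \<partial>Q)\<bar> / B"
    using B by (simp add: diff_divide_distrib[symmetric])
  ultimately show ?thesis using B by (simp add: divide_le_eq mult.commute)
qed

lemma moment_integral_bound:
  fixes \<nu> :: "'a::euclidean_space measure" and F :: "'a \<Rightarrow> real"
  assumes \<nu>: "\<nu> \<in> PpM p Ms" and Fm: "F \<in> borel_measurable borel"
    and Fb: "\<And>x. \<bar>F x\<bar> \<le> c1 + c2 * norm x powr p" and c: "0 \<le> c1" "0 \<le> c2" and Ms0: "0 \<le> Ms"
  shows "\<bar>\<integral>x. F x \<partial>\<nu>\<bar> \<le> c1 + c2 * Ms"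
proof -
  have \<nu>p: "prob_space \<nu>" and \<nu>s: "sets \<nu> = sets borel" and mom: "moment p \<nu> \<le> ennreal Ms"
    using \<nu> unfolding PpM_def prob_measures_def by auto
  interpret prob_space \<nu> by (rule \<nu>p)
  have mcong: "borel_measurable \<nu> = borel_measurable borel" by (rule measurable_cong_sets[OF \<nu>s refl])
  have pm: "(\<lambda>x. norm x powr p) \<in> borel_measurable \<nu>" unfolding mcong by measurable
  have fin: "(\<integral>\<^sup>+x. ennreal (norm x powr p) \<partial>\<nu>) < \<infinity>"
    using mom unfolding moment_def by (simp add: order_le_less_trans)
  have pint: "integrable \<nu> (\<lambda>x. norm x powr p)"
    by (rule integrableI_bounded) (use pm fin in auto)
  have "ennreal (\<integral>x. norm x powr p \<partial>\<nu>) = (\<integral>\<^sup>+x. ennreal (norm x powr p) \<partial>\<nu>)"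
    by (rule nn_integral_eq_integral[symmetric]) (use pint in auto)
  also have "\<dots> \<le> ennreal Ms" using mom unfolding moment_def .
  finally have pM: "(\<integral>x. norm x powr p \<partial>\<nu>) \<le> Ms"
    using Ms0 by (subst (asm) ennreal_le_iff) auto
  have Bint: "integrable \<nu> (\<lambda>x. c1 + c2 * norm x powr p)" using pint by auto
  have Fint: "integrable \<nu> F"
    by (rule Bochner_Integration.integrable_bound[OF Bint]) (use Fm Fb c mcong in auto)
  have "\<bar>\<integral>x. F x \<partial>\<nu>\<bar> \<le> (\<integral>x. \<bar>F x\<bar> \<partial>\<nu>)" by (rule integral_abs_bound)
  also have "\<dots> \<le> (\<integral>x. c1 + c2 * norm x powr p \<partial>\<nu>)"
    by (rule integral_mono) (use Fint Bint Fb in auto)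
  also have "\<dots> = c1 + c2 * (\<integral>x. norm x powr p \<partial>\<nu>)" using pint by (simp add: prob_space)
  also have "\<dots> \<le> c1 + c2 * Ms" using pM c by (simp add: mult_left_mono)
  finally show ?thesis .
qed

lemma unif_conv_ball:
  fixes M :: "'w measure" and Yk :: "nat \<Rightarrow> 'a::euclidean_space \<Rightarrow> 'w \<Rightarrow> 'a" and Y0 :: "'a \<Rightarrow> 'w \<Rightarrow> 'a"
    and f :: "'a \<Rightarrow> real"
  assumes M: "prob_space M"
    and Ykm: "\<And>k x. Yk k x \<in> borel_measurable M" and Y0m: "\<And>x. Y0 x \<in> borel_measurable M"
    and fc: "continuous_on UNIV f" and fb: "\<And>x. \<bar>f x\<bar> \<le> B"
    and pc: "\<And>r xs x \<omega>. strict_mono r \<Longrightarrow> xs \<longlonglongrightarrow> x \<Longrightarrow> \<omega> \<in> space M \<Longrightarrow> (\<lambda>j. Yk (r j) (xs j) \<omega>) \<longlonglongrightarrow> Y0 x \<omega>"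
    and pc0: "\<And>xs x \<omega>. xs \<longlonglongrightarrow> x \<Longrightarrow> \<omega> \<in> space M \<Longrightarrow> (\<lambda>j. Y0 (xs j) \<omega>) \<longlonglongrightarrow> Y0 x \<omega>"
    and \<delta>: "0 < \<delta>"
  shows "eventually (\<lambda>k. \<forall>x. norm x \<le> R \<longrightarrow> \<bar>(\<integral>\<omega>. f (Yk k x \<omega>) \<partial>M) - (\<integral>\<omega>. f (Y0 x \<omega>) \<partial>M)\<bar> \<le> \<delta>) sequentially"
proof (rule ccontr)
  interpret prob_space M by (rule M)
  have fm: "f \<in> borel_measurable borel" by (rule borel_measurable_continuous_onI[OF fc])
  have fcont: "isCont f x" for x using fc by (simp add: continuous_on_eq_continuous_at)
  assume "\<not> ?thesis"
  then obtain r :: "nat \<Rightarrow> nat" where r: "strict_mono r"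
    and nr: "\<And>n. \<not> (\<forall>x. norm x \<le> R \<longrightarrow> \<bar>(\<integral>\<omega>. f (Yk (r n) x \<omega>) \<partial>M) - (\<integral>\<omega>. f (Y0 x \<omega>) \<partial>M)\<bar> \<le> \<delta>)"
    using not_eventually_sequentiallyD by blast
  then have "\<forall>n. \<exists>x. norm x \<le> R \<and> \<bar>(\<integral>\<omega>. f (Yk (r n) x \<omega>) \<partial>M) - (\<integral>\<omega>. f (Y0 x \<omega>) \<partial>M)\<bar> > \<delta>"
    by (metis not_le)
  then obtain xs where xs: "\<And>n. norm (xs n) \<le> R"
    and big: "\<And>n. \<bar>(\<integral>\<omega>. f (Yk (r n) (xs n) \<omega>) \<partial>M) - (\<integral>\<omega>. f (Y0 (xs n) \<omega>) \<partial>M)\<bar> > \<delta>"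
    by metis
  have "\<forall>n. xs n \<in> cball 0 R" using xs by simp
  then obtain l r2 where r2: "strict_mono (r2 :: nat \<Rightarrow> nat)" and lim: "(xs \<circ> r2) \<longlonglongrightarrow> l"
    using seq_compactE[OF compact_imp_seq_compact[OF compact_cball]] by metis
  have rr: "strict_mono (r \<circ> r2)" using r r2 by (rule strict_mono_o)
  have lim': "(\<lambda>j. xs (r2 j)) \<longlonglongrightarrow> l" using lim by (simp add: comp_def)
  have A: "(\<lambda>j. \<integral>\<omega>. f (Yk ((r \<circ> r2) j) (xs (r2 j)) \<omega>) \<partial>M) \<longlonglongrightarrow> (\<integral>\<omega>. f (Y0 l \<omega>) \<partial>M)"
  proof (rule integral_dominated_convergence[where w="\<lambda>_. B"])
    show "(\<lambda>\<omega>. f (Y0 l \<omega>)) \<in> borel_measurable M" using Y0m fm by measurable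
    show "(\<lambda>\<omega>. f (Yk ((r \<circ> r2) j) (xs (r2 j)) \<omega>)) \<in> borel_measurable M" for j using Ykm fm by measurable
    show "integrable M (\<lambda>_. B)" by simp
    show "AE \<omega> in M. (\<lambda>j. f (Yk ((r \<circ> r2) j) (xs (r2 j)) \<omega>)) \<longlonglongrightarrow> f (Y0 l \<omega>)"
      by (rule AE_I2, rule isCont_tendsto_compose[OF fcont], rule pc[OF rr lim']) 
    show "AE \<omega> in M. norm (f (Yk ((r \<circ> r2) j) (xs (r2 j)) \<omega>)) \<le> B" for j using fb by simp
  qed
  have B: "(\<lambda>j. \<integral>\<omega>. f (Y0 (xs (r2 j)) \<omega>) \<partial>M) \<longlonglongrightarrow> (\<integral>\<omega>. f (Y0 l \<omega>) \<partial>M)"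
  proof (rule integral_dominated_convergence[where w="\<lambda>_. B"])
    show "(\<lambda>\<omega>. f (Y0 l \<omega>)) \<in> borel_measurable M" using Y0m fm by measurable
    show "(\<lambda>\<omega>. f (Y0 (xs (r2 j)) \<omega>)) \<in> borel_measurable M" for j using Y0m fm by measurable
    show "integrable M (\<lambda>_. B)" by simp
    show "AE \<omega> in M. (\<lambda>j. f (Y0 (xs (r2 j)) \<omega>)) \<longlonglongrightarrow> f (Y0 l \<omega>)"
      by (rule AE_I2, rule isCont_tendsto_compose[OF fcont], rule pc0[OF lim'])
    show "AE \<omega> in M. norm (f (Y0 (xs (r2 j)) \<omega>)) \<le> B" for j using fb by simp
  qed
  have "(\<lambda>j. \<bar>(\<integral>\<omega>. f (Yk ((r \<circ> r2) j) (xs (r2 j)) \<omega>) \<partial>M) - (\<integral>\<omega>. f (Y0 (xs (r2 j)) \<omega>) \<partial>M)\<bar>)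
      \<longlonglongrightarrow> \<bar>(\<integral>\<omega>. f (Y0 l \<omega>) \<partial>M) - (\<integral>\<omega>. f (Y0 l \<omega>) \<partial>M)\<bar>"
    by (intro tendsto_intros A B)
  then have "eventually (\<lambda>j. \<bar>(\<integral>\<omega>. f (Yk ((r \<circ> r2) j) (xs (r2 j)) \<omega>) \<partial>M) - (\<integral>\<omega>. f (Y0 (xs (r2 j)) \<omega>) \<partial>M)\<bar> < \<delta>) sequentially"
    using \<delta> by (intro order_tendstoD(2)) auto
  then obtain j where "\<bar>(\<integral>\<omega>. f (Yk ((r \<circ> r2) j) (xs (r2 j)) \<omega>) \<partial>M) - (\<integral>\<omega>. f (Y0 (xs (r2 j)) \<omega>) \<partial>M)\<bar> < \<delta>"
    using eventually_sequentially by auto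
  with big[of "r2 j"] show False by simp
qed

lemma prob_int_bound:
  fixes N :: "'a::euclidean_space measure" and f :: "'a \<Rightarrow> real"
  assumes N: "prob_space N" "sets N = sets borel" and fm: "f \<in> borel_measurable borel" and fb: "\<And>x. \<bar>f x\<bar> \<le> B"
  shows "\<bar>\<integral>x. f x \<partial>N\<bar> \<le> B" "integrable N f"
proof -
  interpret N: prob_space N by (rule N(1))
  have gm: "f \<in> borel_measurable N" using fm measurable_cong_sets[OF N(2) refl] by auto
  show fi: "integrable N f" using gm fb by (intro N.integrable_const_bound[where B=B]) auto
  have "\<bar>\<integral>x. f x \<partial>N\<bar> \<le> (\<integral>x. \<bar>f x\<bar> \<partial>N)" by (rule integral_abs_bound)
  also have "\<dots> \<le> (\<integral>x. B \<partial>N)"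
    by (rule integral_mono) (use fi fb in auto)
  also have "\<dots> = B" by (simp add: N.prob_space)
  finally show "\<bar>\<integral>x. f x \<partial>N\<bar> \<le> B" .
qed

theorem proposition2p3:
  fixes M :: "'w measure"
    and \<nu> :: "'a::euclidean_space measure"
    and Z :: "real \<Rightarrow> 'w \<Rightarrow> 'a"
    and b :: "'a \<Rightarrow> 'a measure \<Rightarrow> 'a"
    and Y :: "'a measure \<Rightarrow> 'a \<Rightarrow> real \<Rightarrow> 'w \<Rightarrow> 'a"
    and \<pi> :: "'a measure \<Rightarrow> 'a measure"
    and \<beta>s \<beta> lam1 lam2 Cb \<theta>1 \<theta>2 \<theta>3 \<theta>4 Ms :: real
  assumes levy: "pure_jump_levy M \<nu> Z"
    and nu: "levy_measure_cond \<nu> \<beta>s"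
    and betas: "0 < \<beta>s" "\<beta>s \<le> 2"
    and sol: "\<And>\<mu> x. \<mu> \<in> Pp (\<beta> + \<theta>1 - 1) \<Longrightarrow> sde_solution M Z b \<mu> x (Y \<mu> x)"
    \<comment> \<open>(A1)\<close>
    and A1_consts: "0 < \<beta>" "\<beta> \<le> \<beta>s" "0 < lam1" "0 < lam2" "0 < Cb" "0 < \<theta>1" "0 \<le> \<theta>2"
                   "0 < \<theta>4" "\<theta>1 \<ge> 1 - \<beta> / 2" "\<theta>2 < 1 + \<theta>1"
                   "0 < \<theta>3" "\<theta>3 \<le> \<beta> + \<theta>1 - 1"
    and A1_case: "(\<beta> + \<theta>1 - 1) * (1 - max (\<beta> + \<theta>2 - 2) 0 / (\<beta> + \<theta>1 - 1)) > \<theta>3 * \<theta>4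
                  \<or> ((\<beta> + \<theta>1 - 1) * (1 - max (\<beta> + \<theta>2 - 2) 0 / (\<beta> + \<theta>1 - 1)) = \<theta>3 * \<theta>4
                      \<and> lam1 > lam2)"
    and A1: "\<And>x \<mu>. \<mu> \<in> Pp (\<beta> + \<theta>1 - 1) \<Longrightarrow>
               x \<bullet> b x \<mu> \<le> Cb - lam1 * norm x powr (1 + \<theta>1)
                 + lam2 * (1 + norm x ^ 2) powr (\<theta>2 / 2) * (\<integral>y. norm y powr \<theta>3 \<partial>\<mu>) powr \<theta>4"
    \<comment> \<open>(A2)\<close>
    and A2_Feller: "\<And>\<mu>. \<mu> \<in> Pp (\<beta> + \<theta>1 - 1) \<Longrightarrow> Cb_Feller M (Y \<mu>)"
    and A2_inv: "\<And>\<mu>. \<mu> \<in> Pp (\<beta> + \<theta>1 - 1) \<Longrightarrow> invariant_pm M (Y \<mu>) (\<pi> \<mu>)"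
    and A2_unique: "\<And>\<mu> \<rho>. \<mu> \<in> Pp (\<beta> + \<theta>1 - 1) \<Longrightarrow> invariant_pm M (Y \<mu>) \<rho> \<Longrightarrow> \<rho> = \<pi> \<mu>"
    \<comment> \<open>M*\<close>
    and Ms_pos: "0 < Ms"
    and Ms_inv: "\<And>\<mu>. \<mu> \<in> PpM (\<beta> + \<theta>1 - 1) Ms \<Longrightarrow> \<pi> \<mu> \<in> PpM (\<beta> + \<theta>1 - 1) Ms"
    \<comment> \<open>(A31)\<close>
    and A31: "\<And>\<mu>. \<mu> \<in> PpM (\<beta> + \<theta>1 - 1) Ms \<Longrightarrow>
               \<exists>h :: real \<Rightarrow> real. (\<forall>t\<ge>0. h t \<ge> 0) \<and> (h \<longlongrightarrow> 0) at_top \<and>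
                 (\<forall>x t. t \<ge> 0 \<longrightarrow>
                    var_norm_diff (\<pi> \<mu>) (trans_law M (Y \<mu>) x t)
                      \<le> (1 + norm x powr (\<beta> + \<theta>1 - 1)) * h t)"
    \<comment> \<open>(A32)\<close>
    and A32_mono: "\<And>n \<mu>. n \<ge> 1 \<Longrightarrow> \<mu> \<in> PpM (\<beta> + \<theta>1 - 1) Ms \<Longrightarrow>
               \<exists>K>0. \<forall>x y. max (norm x) (norm y) \<le> real n \<longrightarrow>
                 (x - y) \<bullet> (b x \<mu> - b y \<mu>) \<le> K * norm (x - y) ^ 2"
    and A32_cont: "\<And>n \<mu> \<mu>s. n \<ge> 1 \<Longrightarrow> \<mu> \<in> PpM (\<beta> + \<theta>1 - 1) Ms \<Longrightarrow>
               (\<forall>k. \<mu>s k \<in> PpM (\<beta> + \<theta>1 - 1) Ms) \<Longrightarrow> weak_conv_seq \<mu>s \<mu> \<Longrightarrow>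
               (\<forall>\<epsilon>>0. \<forall>\<^sub>F k in sequentially.
                  \<forall>x. norm x \<le> real n \<longrightarrow> norm (b x (\<mu>s k) - b x \<mu>) \<le> \<epsilon>)"
  shows "\<forall>f :: 'a \<Rightarrow> real. \<forall>\<mu> \<mu>s.
           continuous_on UNIV f \<and> bounded (range f) \<and> \<mu> \<in> PpM (\<beta> + \<theta>1 - 1) Ms \<and>
           (\<forall>k. \<mu>s k \<in> PpM (\<beta> + \<theta>1 - 1) Ms) \<and> weak_conv_seq \<mu>s \<mu> \<longrightarrow>
           (\<lambda>k. \<bar>(\<integral>x. f x \<partial>(\<pi> (\<mu>s k))) - (\<integral>x. f x \<partial>(\<pi> \<mu>))\<bar>) \<longlonglongrightarrow> 0"
proof (intro allI impI)
  fix f :: "'a \<Rightarrow> real" and \<mu> :: "'a measure" and \<mu>s :: "nat \<Rightarrow> 'a measure"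
  assume H: "continuous_on UNIV f \<and> bounded (range f) \<and> \<mu> \<in> PpM (\<beta> + \<theta>1 - 1) Ms \<and>
           (\<forall>k. \<mu>s k \<in> PpM (\<beta> + \<theta>1 - 1) Ms) \<and> weak_conv_seq \<mu>s \<mu>"
  then have fc: "continuous_on UNIV f" and fbd: "bounded (range f)" and \<mu>M: "\<mu> \<in> PpM (\<beta> + \<theta>1 - 1) Ms"
    and \<mu>sM: "\<And>k. \<mu>s k \<in> PpM (\<beta> + \<theta>1 - 1) Ms" and wc: "weak_conv_seq \<mu>s \<mu>" by auto
  have p0: "0 < \<beta> + \<theta>1 - 1" using A1_consts(1) A1_consts(9) by linarith
  have PpM_Pp: "\<nu> \<in> Pp (\<beta> + \<theta>1 - 1)" if "\<nu> \<in> PpM (\<beta> + \<theta>1 - 1) Ms" for \<nu>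
    using that unfolding PpM_def Pp_def by (auto intro: le_less_trans[OF _ ennreal_less_top])
  have PpM_pm: "prob_space \<nu> \<and> sets \<nu> = sets borel" if "\<nu> \<in> PpM (\<beta> + \<theta>1 - 1) Ms" for \<nu>
    using that unfolding PpM_def prob_measures_def by auto
  have Mp: "prob_space M" using levy unfolding pure_jump_levy_def by blast
  have Zc: "continuous (at_right s) (\<lambda>s. Z s \<omega>)" if "\<omega> \<in> space M" "0 \<le> s" for \<omega> s
    using levy that unfolding pure_jump_levy_def by blast
  have Zl: "\<exists>l. ((\<lambda>s. Z s \<omega>) \<longlongrightarrow> l) (at_left s)" if "\<omega> \<in> space M" "0 < s" for \<omega> s
    using levy that unfolding pure_jump_levy_def by (meson less_imp_le)
  have solm: "Y \<nu> x t \<in> borel_measurable M" if "\<nu> \<in> Pp (\<beta> + \<theta>1 - 1)" "0 \<le> t" for \<nu> x t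
    using sol[OF that(1), of x] that(2) unfolding sde_solution_def by blast
  have sole: "set_integrable lborel {0..t} (\<lambda>s. b (Y \<nu> x s \<omega>) \<nu>) \<and>
      Y \<nu> x t \<omega> = x + (LINT s:{0..t}|lborel. b (Y \<nu> x s \<omega>) \<nu>) + Z t \<omega>"
    if "\<nu> \<in> Pp (\<beta> + \<theta>1 - 1)" "\<omega> \<in> space M" "0 \<le> t" for \<nu> x t \<omega>
    using sol[OF that(1), of x] that(2,3) unfolding sde_solution_def by blast
  obtain B0 where B0: "\<forall>y\<in>range f. norm y \<le> B0" using fbd unfolding bounded_iff by blast
  define B where "B = max B0 1"
  have B: "0 < B" "\<And>x. \<bar>f x\<bar> \<le> B" using B0 unfolding B_def by (auto simp: le_max_iff_disj)
  have fm: "f \<in> borel_measurable borel" by (rule borel_measurable_continuous_onI[OF fc])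
  have pconv: "(\<lambda>k. Y (\<nu>s k) (xs k) t \<omega>) \<longlonglongrightarrow> Y \<mu> x t \<omega>"
    if t: "0 \<le> t" and \<omega>: "\<omega> \<in> space M" and \<nu>s: "\<And>k. \<nu>s k \<in> PpM (\<beta> + \<theta>1 - 1) Ms"
      and w\<nu>: "weak_conv_seq \<nu>s \<mu>" and xs: "xs \<longlonglongrightarrow> x" for \<nu>s xs x t \<omega>
  proof -
    obtain Bz where Bz: "\<forall>s\<in>{0..t}. norm (Z s \<omega>) \<le> Bz"
      using cadlag_bounded[of "\<lambda>s. Z s \<omega>" t] Zc[OF \<omega>] Zl[OF \<omega>] by blast
    show ?thesis
    proof (rule path_conv[where z="\<lambda>s. Z s \<omega>" and bb="\<lambda>u. b u \<mu>" and bs="\<lambda>k u. b u (\<nu>s k)"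
          and y="\<lambda>s. Y \<mu> x s \<omega>" and ys="\<lambda>k s. Y (\<nu>s k) (xs k) s \<omega>" and x=x and xs=xs, OF t Bz])
      show "set_integrable lborel {0..t} (\<lambda>r. b (Y \<mu> x r \<omega>) \<mu>)"
        using sole[OF PpM_Pp[OF \<mu>M] \<omega> t] by blast
      show "Y \<mu> x s \<omega> = x + (LINT r:{0..s}|lborel. b (Y \<mu> x r \<omega>) \<mu>) + Z s \<omega>" if "s \<in> {0..t}" for s
        using sole[of \<mu> \<omega> s x] PpM_Pp[OF \<mu>M] \<omega> that by auto
      show "set_integrable lborel {0..t} (\<lambda>r. b (Y (\<nu>s k) (xs k) r \<omega>) (\<nu>s k))" for k
        using sole[OF PpM_Pp[OF \<nu>s] \<omega> t] by blast
      show "Y (\<nu>s k) (xs k) s \<omega> = xs k + (LINT r:{0..s}|lborel. b (Y (\<nu>s k) (xs k) r \<omega>) (\<nu>s k)) + Z s \<omega>"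
        if "s \<in> {0..t}" for k s
        using sole[of "\<nu>s k" \<omega> s "xs k"] PpM_Pp[OF \<nu>s] \<omega> that by auto
      show "\<exists>K>0. \<forall>u v. max (norm u) (norm v) \<le> real n \<longrightarrow> (u - v) \<bullet> (b u \<mu> - b v \<mu>) \<le> K * (norm (u - v))\<^sup>2"
        if "n \<ge> 1" for n
        using A32_mono[OF that \<mu>M] by simp
      show "eventually (\<lambda>k. \<forall>u. norm u \<le> real n \<longrightarrow> norm (b u (\<nu>s k) - b u \<mu>) \<le> \<epsilon>) sequentially"
        if "n \<ge> 1" "\<epsilon> > 0" for n \<epsilon>
        using A32_cont[OF that(1) \<mu>M _ w\<nu>] \<nu>s that(2) by blast
      show "xs \<longlonglongrightarrow> x" by (rule xs)
    qed
  qed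
  show "(\<lambda>k. \<bar>(\<integral>x. f x \<partial>(\<pi> (\<mu>s k))) - (\<integral>x. f x \<partial>(\<pi> \<mu>))\<bar>) \<longlonglongrightarrow> 0"
  proof (rule LIMSEQ_I)
    fix \<eta> :: real assume \<eta>: "0 < \<eta>"
    obtain h where h0: "\<forall>t\<ge>0. h t \<ge> 0" and hlim: "(h \<longlongrightarrow> 0) at_top"
      and hb: "\<forall>x t. t \<ge> 0 \<longrightarrow> var_norm_diff (\<pi> \<mu>) (trans_law M (Y \<mu>) x t) \<le> (1 + norm x powr (\<beta> + \<theta>1 - 1)) * h t"
      using A31[OF \<mu>M] by blast
    define c where "c = \<eta> / (3 * B * (1 + Ms))"
    have c: "0 < c" unfolding c_def using \<eta> B Ms_pos by simp
    have "eventually (\<lambda>t. h t < c \<and> 0 \<le> t) at_top"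
      by (rule eventually_conj[OF order_tendstoD(2)[OF hlim c] eventually_ge_at_top])
    then obtain N where "\<forall>n\<ge>N. h n < c \<and> 0 \<le> n" unfolding eventually_at_top_linorder by blast
    then obtain t where ht: "h t < c" and t: "0 \<le> t" by blast
    have ht0: "0 \<le> h t" using h0 t by blast
    define p where "p = \<beta> + \<theta>1 - 1"
    have p: "0 < p" unfolding p_def by (rule p0)
    define R where "R = (6 * B * Ms / \<eta> + 1) powr (1 / p)"
    have X0: "0 < 6 * B * Ms / \<eta> + 1" using B(1) Ms_pos \<eta> by (intro add_pos_pos divide_pos_pos mult_pos_pos) auto
    have R0: "0 < R" unfolding R_def using X0 by simp
    have Rp: "R powr p = 6 * B * Ms / \<eta> + 1"
      unfolding R_def using X0 p by (simp add: powr_powr)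
    have unif: "eventually (\<lambda>k. \<forall>x. norm x \<le> R \<longrightarrow>
        \<bar>(\<integral>\<omega>. f (Y (\<mu>s k) x t \<omega>) \<partial>M) - (\<integral>\<omega>. f (Y \<mu> x t \<omega>) \<partial>M)\<bar> \<le> \<eta> / 6) sequentially"
    proof (rule unif_conv_ball[OF Mp _ _ fc B(2)])
      show "Y (\<mu>s k) x t \<in> borel_measurable M" for k x using solm[OF PpM_Pp[OF \<mu>sM] t] .
      show "Y \<mu> x t \<in> borel_measurable M" for x using solm[OF PpM_Pp[OF \<mu>M] t] .
      show "(\<lambda>j. Y (\<mu>s (r j)) (xs j) t \<omega>) \<longlonglongrightarrow> Y \<mu> x t \<omega>"
        if r: "strict_mono r" and xs: "xs \<longlonglongrightarrow> x" and \<omega>: "\<omega> \<in> space M" for r xs x \<omega>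
      proof -
        have "weak_conv_seq (\<lambda>j. \<mu>s (r j)) \<mu>"
          unfolding weak_conv_seq_def
        proof (intro allI impI)
          fix g :: "'a \<Rightarrow> real" assume "continuous_on UNIV g \<and> bounded (range g)"
          then have "(\<lambda>n. \<integral>x. g x \<partial>(\<mu>s n)) \<longlonglongrightarrow> (\<integral>x. g x \<partial>\<mu>)" using wc unfolding weak_conv_seq_def by blast
          from LIMSEQ_subseq_LIMSEQ[OF this r] show "(\<lambda>n. \<integral>x. g x \<partial>(\<mu>s (r n))) \<longlonglongrightarrow> (\<integral>x. g x \<partial>\<mu>)"
            by (simp add: comp_def)
        qed
        then show ?thesis using pconv[OF t \<omega>, of "\<lambda>j. \<mu>s (r j)" xs x] \<mu>sM xs by blast
      qed
      show "(\<lambda>j. Y \<mu> (xs j) t \<omega>) \<longlonglongrightarrow> Y \<mu> x t \<omega>" if "xs \<longlonglongrightarrow> x" "\<omega> \<in> space M" for xs x \<omega>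
        using pconv[OF t that(2), of "\<lambda>_. \<mu>" xs x] \<mu>M that(1) by (simp add: weak_conv_seq_def)
    qed (simp add: \<eta>)
    have "eventually (\<lambda>k. \<bar>\<bar>(\<integral>x. f x \<partial>(\<pi> (\<mu>s k))) - (\<integral>x. f x \<partial>(\<pi> \<mu>))\<bar> - 0\<bar> < \<eta>) sequentially"
      using unif
    proof eventually_elim
      case (elim k)
      define \<nu> where "\<nu> = \<mu>s k"
      have \<nu>M: "\<nu> \<in> PpM (\<beta> + \<theta>1 - 1) Ms" unfolding \<nu>_def by (rule \<mu>sM)
      have \<nu>P: "\<nu> \<in> Pp (\<beta> + \<theta>1 - 1)" by (rule PpM_Pp[OF \<nu>M])
      have \<pi>\<nu>M: "\<pi> \<nu> \<in> PpM (\<beta> + \<theta>1 - 1) Ms" by (rule Ms_inv[OF \<nu>M])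
      have \<pi>\<mu>M: "\<pi> \<mu> \<in> PpM (\<beta> + \<theta>1 - 1) Ms" by (rule Ms_inv[OF \<mu>M])
      note \<pi>\<nu> = PpM_pm[OF \<pi>\<nu>M] and \<pi>\<mu> = PpM_pm[OF \<pi>\<mu>M]
      have inv: "invariant_pm M (Y \<nu>) (\<pi> \<nu>)" by (rule A2_inv[OF \<nu>P])
      have Fel: "Cb_Feller M (Y \<nu>)" by (rule A2_Feller[OF \<nu>P])
      define K where "K x = trans_law M (Y \<nu>) x t" for x
      define K\<mu> where "K\<mu> x = trans_law M (Y \<mu>) x t" for x
      have Kp: "prob_space (K x)" for x
        unfolding K_def trans_law_def by (rule prob_space.prob_space_distr[OF Mp solm[OF \<nu>P t]])
      have Ks: "sets (K x) = sets borel" for x unfolding K_def trans_law_def by simp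
      have K\<mu>p: "prob_space (K\<mu> x)" for x
        unfolding K\<mu>_def trans_law_def by (rule prob_space.prob_space_distr[OF Mp solm[OF PpM_Pp[OF \<mu>M] t]])
      have K\<mu>s: "sets (K\<mu> x) = sets borel" for x unfolding K\<mu>_def trans_law_def by simp
      have Kint: "(\<integral>y. f y \<partial>K x) = (\<integral>\<omega>. f (Y \<nu> x t \<omega>) \<partial>M)" for x
        unfolding K_def trans_law_def by (rule integral_distr[OF solm[OF \<nu>P t] fm])
      have K\<mu>int: "(\<integral>y. f y \<partial>K\<mu> x) = (\<integral>\<omega>. f (Y \<mu> x t \<omega>) \<partial>M)" for x
        unfolding K\<mu>_def trans_law_def by (rule integral_distr[OF solm[OF PpM_Pp[OF \<mu>M] t] fm])
      have I1: "(\<integral>x. (\<integral>y. f y \<partial>K x) \<partial>\<pi> \<nu>) = (\<integral>x. f x \<partial>\<pi> \<nu>)"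
      proof (rule kernel_invariant_integral[OF _ _ Kp Ks _ _ fm B(2)])
        show "prob_space (\<pi> \<nu>)" "sets (\<pi> \<nu>) = sets borel" using \<pi>\<nu> by auto
        show "(\<lambda>x. measure (K x) A) \<in> borel_measurable borel" if "A \<in> sets borel" for A
          using Fel t that unfolding Cb_Feller_def K_def by blast
        show "(\<integral>x. measure (K x) A \<partial>\<pi> \<nu>) = measure (\<pi> \<nu>) A" if "A \<in> sets borel" for A
          using inv t that unfolding invariant_pm_def K_def by blast
      qed
      have Pc: "continuous_on UNIV (\<lambda>x. \<integral>y. f y \<partial>K x)"
        using Fel t fc fbd unfolding Cb_Feller_def K_def by blast
      have Pm: "(\<lambda>x. \<integral>y. f y \<partial>K x) \<in> borel_measurable borel" by (rule borel_measurable_continuous_onI[OF Pc])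
      have Pb: "\<bar>\<integral>y. f y \<partial>K x\<bar> \<le> B" for x by (rule prob_int_bound(1)[OF Kp Ks fm B(2)])
      have P\<mu>b: "\<bar>\<integral>y. f y \<partial>K\<mu> x\<bar> \<le> B" for x by (rule prob_int_bound(1)[OF K\<mu>p K\<mu>s fm B(2)])
      define If where "If = (\<integral>x. f x \<partial>\<pi> \<mu>)"
      define F where "F x = (\<integral>y. f y \<partial>K x) - If" for x
      have Fm: "F \<in> borel_measurable borel" unfolding F_def using Pm by measurable
      have intF: "(\<integral>x. F x \<partial>\<pi> \<nu>) = (\<integral>x. f x \<partial>\<pi> \<nu>) - If"
      proof -
        interpret PN: prob_space "\<pi> \<nu>" using \<pi>\<nu> by auto
        have "integrable (\<pi> \<nu>) (\<lambda>x. \<integral>y. f y \<partial>K x)"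
          by (rule prob_int_bound(2)[where B=B]) (use \<pi>\<nu> Pm Pb in auto)
        then have "(\<integral>x. F x \<partial>\<pi> \<nu>) = (\<integral>x. (\<integral>y. f y \<partial>K x) \<partial>\<pi> \<nu>) - (\<integral>x. If \<partial>\<pi> \<nu>)"
          unfolding F_def by (rule Bochner_Integration.integral_diff) simp
        then show ?thesis using I1 by (simp add: PN.prob_space)
      qed
      define q where "q = 2 * B / R powr p"
      have q0: "0 \<le> q" unfolding q_def using B R0 by simp
      have Fb: "\<bar>F x\<bar> \<le> (\<eta> / 6 + B * h t) + (q + B * h t) * norm x powr (\<beta> + \<theta>1 - 1)" for x
      proof -
        have a1: "\<bar>(\<integral>y. f y \<partial>K\<mu> x) - If\<bar> \<le> B * ((1 + norm x powr (\<beta> + \<theta>1 - 1)) * h t)"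
        proof -
          have "\<bar>If - (\<integral>y. f y \<partial>K\<mu> x)\<bar> \<le> B * var_norm_diff (\<pi> \<mu>) (K\<mu> x)"
            unfolding If_def by (rule var_norm_bound[OF _ _ K\<mu>p K\<mu>s fm B(2) B(1)]) (use \<pi>\<mu> in auto)
          also have "\<dots> \<le> B * ((1 + norm x powr (\<beta> + \<theta>1 - 1)) * h t)"
            using hb t B(1) unfolding K\<mu>_def by (simp add: mult_left_mono)
          finally show ?thesis by (simp add: abs_minus_commute)
        qed
        have a2: "\<bar>(\<integral>y. f y \<partial>K x) - (\<integral>y. f y \<partial>K\<mu> x)\<bar> \<le> \<eta> / 6 + q * norm x powr p"
        proof (cases "norm x \<le> R")
          case True
          then have "\<bar>(\<integral>y. f y \<partial>K x) - (\<integral>y. f y \<partial>K\<mu> x)\<bar> \<le> \<eta> / 6"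
            using elim Kint K\<mu>int unfolding \<nu>_def by simp
          moreover have "0 \<le> q * norm x powr p" using q0 by simp
          ultimately show ?thesis by linarith
        next
          case False
          have "\<bar>(\<integral>y. f y \<partial>K x) - (\<integral>y. f y \<partial>K\<mu> x)\<bar> \<le> 2 * B" using Pb[of x] P\<mu>b[of x] by linarith
          also have "\<dots> = q * R powr p" unfolding q_def using R0 by simp
          also have "\<dots> \<le> q * norm x powr p"
            using False R0 p q0 by (intro mult_left_mono powr_mono2) auto
          finally show ?thesis using \<eta> by linarith
        qed
        have "\<bar>F x\<bar> \<le> \<bar>(\<integral>y. f y \<partial>K x) - (\<integral>y. f y \<partial>K\<mu> x)\<bar> + \<bar>(\<integral>y. f y \<partial>K\<mu> x) - If\<bar>"
          unfolding F_def by linarith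
        also have "\<dots> \<le> (\<eta> / 6 + q * norm x powr p) + B * ((1 + norm x powr (\<beta> + \<theta>1 - 1)) * h t)"
          using a1 a2 by linarith
        finally show ?thesis unfolding p_def by (simp add: algebra_simps)
      qed
      have "\<bar>\<integral>x. F x \<partial>\<pi> \<nu>\<bar> \<le> (\<eta> / 6 + B * h t) + (q + B * h t) * Ms"
        by (rule moment_integral_bound[OF \<pi>\<nu>M Fm Fb]) (use \<eta> B ht0 q0 Ms_pos in auto)
      also have "\<dots> < \<eta>"
      proof -
        have e1: "B * h t * (1 + Ms) < \<eta> / 3"
        proof -
          have "B * h t * (1 + Ms) < B * c * (1 + Ms)"
            using ht B(1) Ms_pos by (intro mult_strict_right_mono mult_strict_left_mono) auto
          also have "\<dots> = (c * (3 * B * (1 + Ms))) / 3" by (simp add: algebra_simps)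
          also have "c * (3 * B * (1 + Ms)) = \<eta>"
          proof -
            have "3 * B * (1 + Ms) \<noteq> 0" using B(1) Ms_pos by simp
            then show ?thesis unfolding c_def by simp
          qed
          finally have "B * h t * (1 + Ms) < \<eta> / 3" .
          then show ?thesis .
        qed
        have e2: "q * Ms \<le> \<eta> / 3"
        proof -
          have "q * Ms = 2 * B * Ms / (6 * B * Ms / \<eta> + 1)" unfolding q_def Rp by simp
          also have "\<dots> \<le> \<eta> / 3"
            using X0 \<eta> B(1) Ms_pos by (simp add: divide_le_eq field_simps)
          finally show ?thesis .
        qed
        have "(\<eta> / 6 + B * h t) + (q + B * h t) * Ms = \<eta> / 6 + B * h t * (1 + Ms) + q * Ms"
          by (simp add: algebra_simps)
        then show ?thesis using e1 e2 \<eta> by linarith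
      qed
      finally show ?case using intF unfolding If_def \<nu>_def by simp
    qed
    then show "\<exists>no. \<forall>n\<ge>no. norm (\<bar>(\<integral>x. f x \<partial>(\<pi> (\<mu>s n))) - (\<integral>x. f x \<partial>(\<pi> \<mu>))\<bar> - 0) < \<eta>"
      by (simp add: eventually_sequentially)
  qed
qed

end
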